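(* Let $Y\in\mathbb{R}^{D\times N}$ (the data matrix after subtracting the sample mean of the columns from each column), let $\hat d\in\mathbb{N}$, $\hat d\ge1$, and let $\epsilon>0$. Define $$f(L,R,\Pi)=\tfrac12\|(Y-LR')\Pi^{-1/2}\|_F^2+\tfrac D2\log|\Pi|$$ on the feasible set $\mathcal S=\mathcal S_L\times\mathcal S_R\times\mathcal S_\Pi$, where $\mathcal S_L=\mathbb{R}^{D\times\hat d}$, $\mathcal S_R=\mathbb{R}^{N\times\hat d}$, and $\mathcal S_\Pi$ is the set of $N\times N$ diagonal matrices with all diagonal entries in $[\epsilon,\infty)$, and consider the problem $\min f(L,R,\Pi)$ subject to $(L,R,\Pi)\in\mathcal S$. Initialize as follows: with $Y=\hat U\hat\Sigma\hat V'$ an SVD, set $L_0=\hat U_{1:\hat d}\hat\Sigma_{1:\hat d}^{1/2}$, $R_0=\hat V_{1:\hat d}\hat\Sigma_{1:\hat d}^{1/2}$, $\nu_0=\max\!\big(\max_j \tfrac1D\|(Y-L_0R_0')e_j\|_2^2,\ \epsilon\big)$ and $\Pi_0=\nu_0 I$. Then generate $\{(L_t,R_t,\Pi_t)\}$ by alternating minimization (block nonlinear Gauss–Seidel), each block being updated to an exact minimizer of $f$ over its feasible set with the other blocks at their most recent values: $$L_{t+1}=Y\Pi_t^{-1}R_t(R_t'\Pi_t^{-1}R_t)^{-1},\quad R_{t+1}=Y'L_{t+1}(L_{t+1}'L_{t+1})^{-1},$$ $$(\Pi_{t+1})_{jj}=\max\!\Big(\tfrac1D\|(Y-L_{t+1}R_{t+1}')e_j\|_2^2,\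 \epsilon\Big),\ j=1,\dots,N.$$ Then the limit points of the sequence $\{(L_t,R_t,\Pi_t)\}$ are critical points of this constrained problem.
   Context: $\|\cdot\|_F$ is the Frobenius norm, $|\Pi|$ the determinant, $e_j$ the $j$-th standard basis vector, $\hat U_{1:\hat d}$, $\hat V_{1:\hat d}$ the first $\hat d$ left/right singular vectors and $\hat\Sigma_{1:\hat d}$ the corresponding $\hat d\times\hat d$ diagonal matrix of largest singular values. A critical point of $\min_{w\in\mathcal S}f(w)$ (with $f$ continuously differentiable and $\mathcal S$ closed and convex) is a point $w^*\in\mathcal S$ with $\langle\nabla f(w^* ),w-w^*\rangle\ge0$ for all $w\in\mathcal S$. The matrix inverses in the updates are assumed to exist. *)

theory Defs
  imports Complex_Main "Jordan_Normal_Form.Determinant" "Jordan_Normal_Form.Gauss_Jordan_Elimination"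
begin

text \<open>Matrix inverse (used only where the inverse exists).\<close>
definition minv :: "real mat \<Rightarrow> real mat" where
  "minv A = the (mat_inverse A)"

definition colsq :: "real mat \<Rightarrow> nat \<Rightarrow> real" where
  "colsq A j = (\<Sum>i<dim_row A. (A $$ (i, j))\<^sup>2)"

definition frob :: "real mat \<Rightarrow> real" where
  "frob A = sqrt (\<Sum>i<dim_row A. \<Sum>j<dim_col A. (A $$ (i, j))\<^sup>2)"

definition is_diag :: "real mat \<Rightarrow> bool" where
  "is_diag A \<longleftrightarrow> (\<forall>i<dim_row A. \<forall>j<dim_col A. i \<noteq> j \<longrightarrow> A $$ (i, j) = 0)"

text \<open>Objective f(L,R,Pi) = 1/2 ||(Y - L R') Pi^(-1/2)||_F^2 + D/2 log |Pi|, for diagonal Pi with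
  positive diagonal; Pi^(-1/2) of such a diagonal matrix is the diagonal matrix of the entries^(-1/2).\<close>
definition fobj :: "real mat \<Rightarrow> real mat \<Rightarrow> real mat \<Rightarrow> real mat \<Rightarrow> real" where
  "fobj Y L R P =
     (1/2) * (frob ((Y - L * transpose_mat R) * mat_diag (dim_col Y) (\<lambda>j. 1 / sqrt (P $$ (j, j)))))\<^sup>2
     + (real (dim_row Y) / 2) * ln (det P)"

definition feasible :: "nat \<Rightarrow> nat \<Rightarrow> nat \<Rightarrow> real \<Rightarrow> real mat \<Rightarrow> real mat \<Rightarrow> real mat \<Rightarrow> bool" where
  "feasible D N d \<epsilon> L R P \<longleftrightarrow>
     L \<in> carrier_mat D d \<and> R \<in> carrier_mat N d \<and> P \<in> carrier_mat N N \<and> is_diag P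
     \<and> (\<forall>j<N. P $$ (j, j) \<ge> \<epsilon>)"

text \<open>The gradient is the vector of partial derivatives w.r.t. the coordinates of the variable
  (L,R,Pi); Pi ranges over the linear space of diagonal N x N matrices, whose coordinates are
  the diagonal entries.\<close>
definition critical_point :: "real mat \<Rightarrow> nat \<Rightarrow> real \<Rightarrow> real mat \<Rightarrow> real mat \<Rightarrow> real mat \<Rightarrow> bool" where
  "critical_point Y d \<epsilon> L R P \<longleftrightarrow>
     feasible (dim_row Y) (dim_col Y) d \<epsilon> L R P \<and>
     (\<exists>gL gR gP.
        (\<forall>i<dim_row Y. \<forall>k<d.
           ((\<lambda>x. fobj Y (L |\<^sub>m (i, k) \<mapsto> x) R P) has_real_derivative gL i k) (at (L $$ (i, k)))) \<and>
        (\<forall>j<dim_col Y. \<forall>k<d.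
           ((\<lambda>x. fobj Y L (R |\<^sub>m (j, k) \<mapsto> x) P) has_real_derivative gR j k) (at (R $$ (j, k)))) \<and>
        (\<forall>j<dim_col Y.
           ((\<lambda>x. fobj Y L R (P |\<^sub>m (j, j) \<mapsto> x)) has_real_derivative gP j) (at (P $$ (j, j)))) \<and>
        (\<forall>L' R' P'. feasible (dim_row Y) (dim_col Y) d \<epsilon> L' R' P' \<longrightarrow>
          0 \<le> (\<Sum>i<dim_row Y. \<Sum>k<d. gL i k * (L' $$ (i, k) - L $$ (i, k)))
             + (\<Sum>j<dim_col Y. \<Sum>k<d. gR j k * (R' $$ (j, k) - R $$ (j, k)))
             + (\<Sum>j<dim_col Y. gP j * (P' $$ (j, j) - P $$ (j, j)))))"

text \<open>Entrywise convergence of a sequence of matrices to A (finite dimensional, so equivalent to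
  convergence in any norm).\<close>
definition mat_tendsto :: "(nat \<Rightarrow> real mat) \<Rightarrow> real mat \<Rightarrow> bool" where
  "mat_tendsto X A \<longleftrightarrow> (\<forall>i<dim_row A. \<forall>j<dim_col A. (\<lambda>t. X t $$ (i, j)) \<longlonglongrightarrow> A $$ (i, j))"

definition limit_point3 ::
  "(nat \<Rightarrow> real mat) \<Rightarrow> (nat \<Rightarrow> real mat) \<Rightarrow> (nat \<Rightarrow> real mat) \<Rightarrow> real mat \<Rightarrow> real mat \<Rightarrow> real mat \<Rightarrow> bool" where
  "limit_point3 Ls Rs Ps L R P \<longleftrightarrow>
     (\<exists>\<phi>. strict_mono \<phi> \<and> mat_tendsto (Ls \<circ> \<phi>) L \<and> mat_tendsto (Rs \<circ> \<phi>) R \<and> mat_tendsto (Ps \<circ> \<phi>) P)"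

definition is_svd :: "real mat \<Rightarrow> real mat \<Rightarrow> real mat \<Rightarrow> real mat \<Rightarrow> bool" where
  "is_svd Y U S V \<longleftrightarrow>
     U \<in> carrier_mat (dim_row Y) (dim_row Y) \<and> V \<in> carrier_mat (dim_col Y) (dim_col Y) \<and>
     S \<in> carrier_mat (dim_row Y) (dim_col Y) \<and>
     transpose_mat U * U = 1\<^sub>m (dim_row Y) \<and> transpose_mat V * V = 1\<^sub>m (dim_col Y) \<and>
     is_diag S \<and> (\<forall>i < min (dim_row Y) (dim_col Y). S $$ (i, i) \<ge> 0) \<and>
     (\<forall>i j. i \<le> j \<and> j < min (dim_row Y) (dim_col Y) \<longrightarrow> S $$ (j, j) \<le> S $$ (i, i)) \<and>
     Y = U * S * transpose_mat V"

end

theory Submission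
  imports Defs
begin

lemma minv_props:
  assumes A: "A \<in> carrier_mat n n" and inv: "invertible_mat A"
  shows "A * minv A = 1\<^sub>m n \<and> minv A * A = 1\<^sub>m n \<and> minv A \<in> carrier_mat n n"
proof -
  from inv obtain B where AB: "A * B = 1\<^sub>m (dim_row A)" and BA: "B * A = 1\<^sub>m (dim_row B)"
    unfolding invertible_mat_def inverts_mat_def by auto
  have Bc: "B \<in> carrier_mat n n" using A AB BA
    by (metis carrier_matD carrier_matI index_mult_mat(2,3) index_one_mat(2,3))
  have "A \<in> Units (ring_mat TYPE(real) n ())"
    using A Bc AB BA unfolding Units_def ring_mat_def by auto
  then have "mat_inverse A \<noteq> None" using mat_inverse(1)[OF A, of "()"] by blast
  then obtain C where "mat_inverse A = Some C" by auto
  then show ?thesis using mat_inverse(2)[OF A] unfolding minv_def by auto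
qed

lemma diag_eq:
  assumes P: "P \<in> carrier_mat n n" and d: "is_diag P"
  shows "P = mat_diag n (\<lambda>j. P $$ (j, j))"
  using P d unfolding is_diag_def mat_diag_def by (intro eq_matI) auto

lemma minv_diag:
  assumes p: "\<forall>j<n. p j \<noteq> 0"
  shows "minv (mat_diag n p) = mat_diag n (\<lambda>j. 1 / p j)"
proof -
  have 1: "mat_diag n p * mat_diag n (\<lambda>j. 1 / p j) = 1\<^sub>m n"
    using p unfolding mat_diag_diag by (intro eq_matI) (auto simp: mat_diag_def)
  have 2: "mat_diag n (\<lambda>j. 1 / p j) * mat_diag n p = 1\<^sub>m n"
    using p unfolding mat_diag_diag by (intro eq_matI) (auto simp: mat_diag_def)
  have inv: "invertible_mat (mat_diag n p)"
    unfolding invertible_mat_def inverts_mat_def square_mat.simps using 1 2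
    by (metis carrier_matD(1,2) mat_diag_dim)
  from minv_props[OF mat_diag_dim inv]
  have "minv (mat_diag n p) = 1\<^sub>m n * minv (mat_diag n p)"
    using minv_props[OF mat_diag_dim inv] by (metis left_mult_one_mat)
  also have "\<dots> = (mat_diag n (\<lambda>j. 1 / p j) * mat_diag n p) * minv (mat_diag n p)"
    by (simp only: 2)
  also have "\<dots> = mat_diag n (\<lambda>j. 1 / p j) * (mat_diag n p * minv (mat_diag n p))"
    using minv_props[OF mat_diag_dim inv] by (intro assoc_mult_mat[of _ n n _ n _ n]) auto
  also have "\<dots> = mat_diag n (\<lambda>j. 1 / p j)" using minv_props[OF mat_diag_dim inv]
    by (metis mat_diag_dim right_mult_one_mat)
  finally show ?thesis .
qed

lemma det_diag: "det (mat_diag n p) = (\<Prod>j<n. p j)"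
proof -
  have "upper_triangular (mat_diag n p)" unfolding upper_triangular_def mat_diag_def by auto
  then have "det (mat_diag n p) = prod_list (diag_mat (mat_diag n p))"
    using det_upper_triangular mat_diag_dim by blast
  also have "\<dots> = (\<Prod>j<n. p j)"
    unfolding diag_mat_def mat_diag_def by (simp add: prod.distinct_set_conv_list[symmetric] lessThan_atLeast0)
  finally show ?thesis .
qed

definition Fx :: "real mat \<Rightarrow> nat \<Rightarrow> nat \<Rightarrow> nat \<Rightarrow> real mat \<Rightarrow> real mat \<Rightarrow> (nat \<Rightarrow> real) \<Rightarrow> real" where
  "Fx Y D N d L R p = (1/2) * (\<Sum>j<N. (\<Sum>i<D. (Y $$ (i, j) - (\<Sum>k<d. L $$ (i, k) * R $$ (j, k)))\<^sup>2) / p j)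
     + (real D / 2) * (\<Sum>j<N. ln (p j))"

lemma resid_index:
  assumes Y: "Y \<in> carrier_mat D N" and L: "L \<in> carrier_mat D d" and R: "R \<in> carrier_mat N d"
    and i: "i < D" and j: "j < N"
  shows "(Y - L * transpose_mat R) $$ (i, j) = Y $$ (i, j) - (\<Sum>k<d. L $$ (i, k) * R $$ (j, k))"
  using Y L R i j by (simp add: scalar_prod_def lessThan_atLeast0)

lemma fobj_eq:
  assumes Y: "Y \<in> carrier_mat D N" and L: "L \<in> carrier_mat D d" and R: "R \<in> carrier_mat N d"
    and P: "P \<in> carrier_mat N N" and dg: "is_diag P" and pos: "\<forall>j<N. P $$ (j, j) > 0"
  shows "fobj Y L R P = Fx Y D N d L R (\<lambda>j. P $$ (j, j))"
proof -
  define M where "M = Y - L * transpose_mat R"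
  have Mc: "M \<in> carrier_mat D N" unfolding M_def using Y L R by auto
  have dY: "dim_row Y = D" "dim_col Y = N" using Y by auto
  have MD: "M * mat_diag N (\<lambda>j. 1 / sqrt (P $$ (j, j))) = mat D N (\<lambda>(i,j). M $$ (i,j) * (1 / sqrt (P $$ (j, j))))"
    using mat_diag_mult_right[OF Mc] .
  have "(frob (M * mat_diag N (\<lambda>j. 1 / sqrt (P $$ (j, j)))))\<^sup>2
      = (\<Sum>i<D. \<Sum>j<N. (M $$ (i,j) * (1 / sqrt (P $$ (j, j))))\<^sup>2)"
    unfolding MD frob_def by (simp add: sum_nonneg)
  also have "\<dots> = (\<Sum>i<D. \<Sum>j<N. (M $$ (i,j))\<^sup>2 / P $$ (j, j))"
    using pos by (intro sum.cong refl) (simp add: power_mult_distrib power_divide less_imp_le)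
  also have "\<dots> = (\<Sum>j<N. (\<Sum>i<D. (M $$ (i,j))\<^sup>2) / P $$ (j, j))"
    by (subst sum.swap) (simp add: sum_divide_distrib)
  also have "\<dots> = (\<Sum>j<N. (\<Sum>i<D. (Y $$ (i, j) - (\<Sum>k<d. L $$ (i, k) * R $$ (j, k)))\<^sup>2) / P $$ (j, j))"
    unfolding M_def using resid_index[OF Y L R] by simp
  finally have fr: "(frob (M * mat_diag N (\<lambda>j. 1 / sqrt (P $$ (j, j)))))\<^sup>2
      = (\<Sum>j<N. (\<Sum>i<D. (Y $$ (i, j) - (\<Sum>k<d. L $$ (i, k) * R $$ (j, k)))\<^sup>2) / P $$ (j, j))" .
  have "det P = (\<Prod>j<N. P $$ (j, j))" using diag_eq[OF P dg] det_diag by metis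
  then have "ln (det P) = (\<Sum>j<N. ln (P $$ (j, j)))" using pos by (simp, subst ln_prod) auto
  then show ?thesis unfolding fobj_def Fx_def dY fr[unfolded M_def] by simp
qed

lemma ls_core:
  fixes E0 Dl :: "nat \<Rightarrow> nat \<Rightarrow> real"
  assumes pos: "\<forall>j<N. p j > 0" and cr: "(\<Sum>j<N. \<Sum>i<D. E0 i j * Dl i j / p j) = 0"
  shows "(\<Sum>j<N. (\<Sum>i<D. (E0 i j)\<^sup>2) / p j) \<le> (\<Sum>j<N. (\<Sum>i<D. (E0 i j + Dl i j)\<^sup>2) / p j)"
proof -
  have "(\<Sum>j<N. (\<Sum>i<D. (E0 i j)\<^sup>2) / p j) + 2 * (\<Sum>j<N. \<Sum>i<D. E0 i j * Dl i j / p j)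
      = (\<Sum>j<N. \<Sum>i<D. ((E0 i j)\<^sup>2 + 2 * (E0 i j * Dl i j)) / p j)"
    by (simp add: sum_divide_distrib sum.distrib sum_distrib_left add_divide_distrib)
  also have "\<dots> \<le> (\<Sum>j<N. \<Sum>i<D. (E0 i j + Dl i j)\<^sup>2 / p j)"
  proof (intro sum_mono)
    fix j i assume j: "j \<in> {..<N}"
    have "(E0 i j)\<^sup>2 + 2 * (E0 i j * Dl i j) \<le> (E0 i j + Dl i j)\<^sup>2"
      by (simp add: power2_eq_square algebra_simps)
    then show "((E0 i j)\<^sup>2 + 2 * (E0 i j * Dl i j)) / p j \<le> (E0 i j + Dl i j)\<^sup>2 / p j"
      using pos j by (intro divide_right_mono) auto
  qed
  also have "\<dots> = (\<Sum>j<N. (\<Sum>i<D. (E0 i j + Dl i j)\<^sup>2) / p j)"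
    by (simp add: sum_divide_distrib)
  finally show ?thesis using cr by simp
qed

lemma ls_L:
  assumes pos: "\<forall>j<N. p j > 0"
    and ne: "\<forall>i<D. \<forall>k<d. (\<Sum>j<N. (Y $$ (i, j) - (\<Sum>k'<d. L0 $$ (i, k') * R $$ (j, k'))) / p j * R $$ (j, k)) = 0"
  shows "Fx Y D N d L0 R p \<le> Fx Y D N d L R p"
proof -
  define E0 where "E0 i j = Y $$ (i, j) - (\<Sum>k'<d. L0 $$ (i, k') * R $$ (j, k'))" for i j
  define Dl where "Dl i j = (\<Sum>k<d. (L0 $$ (i, k) - L $$ (i, k)) * R $$ (j, k))" for i j
  have sumE: "E0 i j + Dl i j = Y $$ (i, j) - (\<Sum>k<d. L $$ (i, k) * R $$ (j, k))" for i j
    unfolding E0_def Dl_def by (simp add: algebra_simps sum_subtractf)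
  have "(\<Sum>j<N. \<Sum>i<D. E0 i j * Dl i j / p j)
      = (\<Sum>j<N. \<Sum>i<D. \<Sum>k<d. (L0 $$ (i, k) - L $$ (i, k)) * (E0 i j / p j * R $$ (j, k)))"
    unfolding Dl_def by (simp add: sum_distrib_left sum_divide_distrib algebra_simps)
  also have "\<dots> = (\<Sum>i<D. \<Sum>j<N. \<Sum>k<d. (L0 $$ (i, k) - L $$ (i, k)) * (E0 i j / p j * R $$ (j, k)))"
    by (rule sum.swap)
  also have "\<dots> = (\<Sum>i<D. \<Sum>k<d. \<Sum>j<N. (L0 $$ (i, k) - L $$ (i, k)) * (E0 i j / p j * R $$ (j, k)))"
    by (rule sum.cong[OF refl], rule sum.swap)
  also have "\<dots> = (\<Sum>i<D. \<Sum>k<d. (L0 $$ (i, k) - L $$ (i, k)) * (\<Sum>j<N. E0 i j / p j * R $$ (j, k)))"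
    by (simp add: sum_distrib_left)
  also have "\<dots> = 0" using ne unfolding E0_def by simp
  finally have cr: "(\<Sum>j<N. \<Sum>i<D. E0 i j * Dl i j / p j) = 0" .
  from ls_core[OF pos cr] show ?thesis unfolding Fx_def sumE unfolding E0_def by simp
qed

lemma ls_R:
  assumes pos: "\<forall>j<N. p j > 0"
    and ne: "\<forall>j<N. \<forall>k<d. (\<Sum>i<D. (Y $$ (i, j) - (\<Sum>k'<d. L $$ (i, k') * R0 $$ (j, k'))) * L $$ (i, k)) = 0"
  shows "Fx Y D N d L R0 p \<le> Fx Y D N d L R p"
proof -
  define E0 where "E0 i j = Y $$ (i, j) - (\<Sum>k'<d. L $$ (i, k') * R0 $$ (j, k'))" for i j
  define Dl where "Dl i j = (\<Sum>k<d. L $$ (i, k) * (R0 $$ (j, k) - R $$ (j, k)))" for i j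
  have sumE: "E0 i j + Dl i j = Y $$ (i, j) - (\<Sum>k<d. L $$ (i, k) * R $$ (j, k))" for i j
    unfolding E0_def Dl_def by (simp add: algebra_simps sum_subtractf)
  have "(\<Sum>i<D. E0 i j * Dl i j) = 0" if j: "j < N" for j
  proof -
    have "(\<Sum>i<D. E0 i j * Dl i j) = (\<Sum>i<D. \<Sum>k<d. (R0 $$ (j, k) - R $$ (j, k)) * (E0 i j * L $$ (i, k)))"
      unfolding Dl_def by (simp add: sum_distrib_left algebra_simps)
    also have "\<dots> = (\<Sum>k<d. \<Sum>i<D. (R0 $$ (j, k) - R $$ (j, k)) * (E0 i j * L $$ (i, k)))"
      by (rule sum.swap)
    also have "\<dots> = (\<Sum>k<d. (R0 $$ (j, k) - R $$ (j, k)) * (\<Sum>i<D. E0 i j * L $$ (i, k)))"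
      by (simp add: sum_distrib_left)
    also have "\<dots> = 0" using ne j unfolding E0_def by simp
    finally show ?thesis .
  qed
  then have cr: "(\<Sum>j<N. \<Sum>i<D. E0 i j * Dl i j / p j) = 0"
    by (simp add: sum_divide_distrib[symmetric])
  from ls_core[OF pos cr] show ?thesis unfolding Fx_def sumE unfolding E0_def by simp
qed

lemma scal:
  fixes c Dr e x :: real
  assumes c: "c \<ge> 0" and Dr: "Dr > 0" and e: "e > 0" and x: "x \<ge> e"
  shows "c / (2 * max (c / Dr) e) + Dr / 2 * ln (max (c / Dr) e) \<le> c / (2 * x) + Dr / 2 * ln x"
proof -
  define m where "m = max (c / Dr) e"
  have m: "m > 0" "m \<ge> e" using e unfolding m_def by auto
  have xp: "x > 0" using x e by auto
  have "ln (m / x) \<le> m / x - 1" using m xp by (intro ln_le_minus_one) auto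
  then have l: "ln x - ln m \<ge> 1 - m / x" using m xp by (simp add: ln_div)
  have key: "(x - m) * (Dr * m - c) \<ge> 0"
  proof (cases "c / Dr \<le> e")
    case True
    then have "m = e" unfolding m_def by auto
    moreover have "Dr * e - c \<ge> 0" using True Dr by (simp add: divide_le_eq mult.commute)
    ultimately show ?thesis using x by simp
  next
    case False
    then have "m = c / Dr" unfolding m_def by auto
    then have "Dr * m - c = 0" using Dr by simp
    then show ?thesis by simp
  qed
  have "c / (2 * m) - c / (2 * x) = c * (x - m) / (2 * m * x)" using m xp by (simp add: field_simps)
  also have "\<dots> \<le> Dr * m * (x - m) / (2 * m * x)"
  proof (rule divide_right_mono)
    show "c * (x - m) \<le> Dr * m * (x - m)" using key by (simp add: algebra_simps)
  qed (use m xp in auto)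
  also have "\<dots> = Dr / 2 * (1 - m / x)" using m xp by (simp add: field_simps)
  also have "\<dots> \<le> Dr / 2 * (ln x - ln m)" using l Dr by (intro mult_left_mono) auto
  finally show ?thesis unfolding m_def[symmetric] by (simp add: algebra_simps)
qed

lemma Fx_alt: "Fx Y D N d L R p = (\<Sum>j<N. (\<Sum>i<D. (Y $$ (i, j) - (\<Sum>k<d. L $$ (i, k) * R $$ (j, k)))\<^sup>2) / (2 * p j)
     + real D / 2 * ln (p j))"
  unfolding Fx_def by (simp add: sum.distrib sum_distrib_left sum_divide_distrib[symmetric] mult.commute)

lemma ls_P:
  assumes D: "D \<ge> 1" and e: "e > 0" and p: "\<forall>j<N. p j \<ge> e"
  shows "Fx Y D N d L R (\<lambda>j. max ((\<Sum>i<D. (Y $$ (i, j) - (\<Sum>k<d. L $$ (i, k) * R $$ (j, k)))\<^sup>2) / real D) e)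
    \<le> Fx Y D N d L R p"
  unfolding Fx_alt
proof (intro sum_mono)
  fix j assume "j \<in> {..<N}"
  then show "(\<Sum>i<D. (Y $$ (i, j) - (\<Sum>k<d. L $$ (i, k) * R $$ (j, k)))\<^sup>2) /
          (2 * max ((\<Sum>i<D. (Y $$ (i, j) - (\<Sum>k<d. L $$ (i, k) * R $$ (j, k)))\<^sup>2) / real D) e) +
          real D / 2 * ln (max ((\<Sum>i<D. (Y $$ (i, j) - (\<Sum>k<d. L $$ (i, k) * R $$ (j, k)))\<^sup>2) / real D) e)
          \<le> (\<Sum>i<D. (Y $$ (i, j) - (\<Sum>k<d. L $$ (i, k) * R $$ (j, k)))\<^sup>2) / (2 * p j) +
          real D / 2 * ln (p j)"
    using p D e by (intro scal) (auto simp: sum_nonneg)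
qed

lemma normal_L:
  fixes Y W R :: "real mat"
  assumes Y: "Y \<in> carrier_mat D N" and W: "W \<in> carrier_mat N N" and R: "R \<in> carrier_mat N d"
    and inv: "invertible_mat (transpose_mat R * W * R)"
    and L: "L = Y * W * R * minv (transpose_mat R * W * R)"
  shows "(Y - L * transpose_mat R) * W * R = 0\<^sub>m D d" and "L \<in> carrier_mat D d"
proof -
  define M where "M = transpose_mat R * W * R"
  have M: "M \<in> carrier_mat d d" unfolding M_def using R W by auto
  note mi = minv_props[OF M inv[folded M_def]]
  have Mi: "minv M \<in> carrier_mat d d" using mi by auto
  define A where "A = Y * W * R"
  have A: "A \<in> carrier_mat D d" unfolding A_def using Y W R by auto
  have Lc: "L \<in> carrier_mat D d" unfolding L M_def[symmetric] A_def[symmetric] using A Mi by auto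
  then show "L \<in> carrier_mat D d" .
  have LM: "L * M = A"
  proof -
    have "L * M = A * (minv M * M)" unfolding L M_def[symmetric] A_def[symmetric]
      using A Mi M by (simp add: assoc_mult_mat[of _ D d _ d _ d])
    also have "\<dots> = A" using mi A by simp
    finally show ?thesis .
  qed
  have Rt: "transpose_mat R \<in> carrier_mat d N" using R by auto
  have "(Y - L * transpose_mat R) * W * R = (Y * W - L * transpose_mat R * W) * R"
    using Y Lc Rt W by (simp add: minus_mult_distrib_mat[of _ D N])
  also have "\<dots> = Y * W * R - L * transpose_mat R * W * R"
    using Y Lc Rt W R by (simp add: minus_mult_distrib_mat[of _ D N])
  also have "L * transpose_mat R * W * R = L * M"
    unfolding M_def using Lc Rt W R by (simp add: assoc_mult_mat[of _ D d _ N _ N] assoc_mult_mat[of _ D d _ N _ d] assoc_mult_mat[of _ d N _ N _ d])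
  finally show "(Y - L * transpose_mat R) * W * R = 0\<^sub>m D d" unfolding LM A_def[symmetric] using A by simp
qed

lemma normal_R:
  fixes Y L :: "real mat"
  assumes Y: "Y \<in> carrier_mat D N" and L: "L \<in> carrier_mat D d"
    and inv: "invertible_mat (transpose_mat L * L)"
    and R: "R = transpose_mat Y * L * minv (transpose_mat L * L)"
  shows "transpose_mat (Y - L * transpose_mat R) * L = 0\<^sub>m N d" and "R \<in> carrier_mat N d"
proof -
  define M where "M = transpose_mat L * L"
  have M: "M \<in> carrier_mat d d" unfolding M_def using L by auto
  note mi = minv_props[OF M inv[folded M_def]]
  have Mi: "minv M \<in> carrier_mat d d" using mi by auto
  define A where "A = transpose_mat Y * L"
  have A: "A \<in> carrier_mat N d" unfolding A_def using Y L by auto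
  have Rc: "R \<in> carrier_mat N d" unfolding R M_def[symmetric] A_def[symmetric] using A Mi by auto
  then show "R \<in> carrier_mat N d" .
  have RM: "R * M = A"
  proof -
    have "R * M = A * (minv M * M)" unfolding R M_def[symmetric] A_def[symmetric]
      using A Mi M by (simp add: assoc_mult_mat[of _ N d _ d _ d])
    also have "\<dots> = A" using mi A by simp
    finally show ?thesis .
  qed
  have Lt: "transpose_mat L \<in> carrier_mat d D" using L by auto
  have "transpose_mat (Y - L * transpose_mat R) = transpose_mat Y - R * transpose_mat L"
    using Y L Rc by (simp add: transpose_minus transpose_mult)
  then have "transpose_mat (Y - L * transpose_mat R) * L = (transpose_mat Y - R * transpose_mat L) * L" by simp
  also have "\<dots> = A - R * transpose_mat L * L"
    unfolding A_def using Y L Rc Lt by (simp add: minus_mult_distrib_mat[of _ N D])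
  also have "R * transpose_mat L * L = R * M"
    unfolding M_def using Rc Lt L by (simp add: assoc_mult_mat[of _ N d _ D _ d])
  finally show "transpose_mat (Y - L * transpose_mat R) * L = 0\<^sub>m N d" unfolding RM using A by simp
qed

lemma entry_L:
  assumes Y: "Y \<in> carrier_mat D N" and L: "L \<in> carrier_mat D d" and R: "R \<in> carrier_mat N d"
    and i: "i < D" and k: "k < d"
  shows "((Y - L * transpose_mat R) * mat_diag N w * R) $$ (i, k)
     = (\<Sum>j<N. (Y $$ (i, j) - (\<Sum>k'<d. L $$ (i, k') * R $$ (j, k'))) * w j * R $$ (j, k))"
proof -
  have E: "Y - L * transpose_mat R \<in> carrier_mat D N" using Y L R by auto
  have "(Y - L * transpose_mat R) * mat_diag N w = mat D N (\<lambda>(i,j). (Y - L * transpose_mat R) $$ (i,j) * w j)"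
    by (rule mat_diag_mult_right[OF E])
  then show ?thesis using i k R resid_index[OF Y L R i]
    by (simp add: scalar_prod_def lessThan_atLeast0)
qed

lemma entry_R:
  assumes Y: "Y \<in> carrier_mat D N" and L: "L \<in> carrier_mat D d" and R: "R \<in> carrier_mat N d"
    and j: "j < N" and k: "k < d"
  shows "(transpose_mat (Y - L * transpose_mat R) * L) $$ (j, k)
     = (\<Sum>i<D. (Y $$ (i, j) - (\<Sum>k'<d. L $$ (i, k') * R $$ (j, k'))) * L $$ (i, k))"
  using j k Y L R resid_index[OF Y L R _ j]
  by (simp add: scalar_prod_def lessThan_atLeast0)

definition Fxf :: "real mat \<Rightarrow> nat \<Rightarrow> nat \<Rightarrow> nat \<Rightarrow> (nat \<Rightarrow> nat \<Rightarrow> real) \<Rightarrow> (nat \<Rightarrow> nat \<Rightarrow> real) \<Rightarrow> (nat \<Rightarrow> real) \<Rightarrow> real" where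
  "Fxf Y D N d lf rf p = (1/2) * (\<Sum>j<N. (\<Sum>i<D. (Y $$ (i, j) - (\<Sum>k<d. lf i k * rf j k))\<^sup>2) / p j)
     + (real D / 2) * (\<Sum>j<N. ln (p j))"

lemma Fx_Fxf: "Fx Y D N d L R p = Fxf Y D N d (\<lambda>i k. L $$ (i, k)) (\<lambda>j k. R $$ (j, k)) p"
  unfolding Fx_def Fxf_def ..

lemma Fx_mat_L: "Fx Y D N d (mat D d lf) R p = Fxf Y D N d (\<lambda>i k. lf (i, k)) (\<lambda>j k. R $$ (j, k)) p"
  unfolding Fx_def Fxf_def by simp

lemma Fx_mat_R: "Fx Y D N d L (mat N d rf) p = Fxf Y D N d (\<lambda>i k. L $$ (i, k)) (\<lambda>j k. rf (j, k)) p"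
  unfolding Fx_def Fxf_def by simp

lemma Fx_cong_p: "(\<forall>j<N. p j = q j) \<Longrightarrow> Fx Y D N d L R p = Fx Y D N d L R q"
  unfolding Fx_def by simp

lemma DERIV_if_const: "((\<lambda>x::real. if b then x else c) has_field_derivative (if b then 1 else 0)) F"
  by (cases b) (auto intro: derivative_eq_intros)

lemma derL: "\<forall>j<N. p j > 0 \<Longrightarrow> \<exists>g. ((\<lambda>x. Fxf Y D N d (\<lambda>i' k'. if (i', k') = (i, k) then x else L $$ (i', k')) rf p) has_real_derivative g) (at a)"
  unfolding Fxf_def by (intro exI) (auto intro!: derivative_eq_intros DERIV_if_const)

lemma derR: "\<forall>j<N. p j > 0 \<Longrightarrow> \<exists>g. ((\<lambda>x. Fxf Y D N d lf (\<lambda>j' k'. if (j', k') = (j, k) then x else R $$ (j', k')) p) has_real_derivative g) (at a)"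
  unfolding Fxf_def by (intro exI) (auto intro!: derivative_eq_intros DERIV_if_const)

lemma derP:
  assumes pos: "\<forall>j'<N. p j' > 0" and a: "a > 0"
  shows "\<exists>g. ((\<lambda>x. Fx Y D N d L R (p(j := x))) has_real_derivative g) (at a)"
  unfolding Fx_def fun_upd_apply
  using pos a by (intro exI) (auto intro!: derivative_eq_intros DERIV_if_const split: if_split_asm)

lemma Fx_tendsto:
  assumes L: "\<forall>i<D. \<forall>k<d. (\<lambda>t. Lt t $$ (i, k)) \<longlonglongrightarrow> L $$ (i, k)"
    and R: "\<forall>j<N. \<forall>k<d. (\<lambda>t. Rt t $$ (j, k)) \<longlonglongrightarrow> R $$ (j, k)"
    and p: "\<forall>j<N. (\<lambda>t. pt t j) \<longlonglongrightarrow> p j" and pos: "\<forall>j<N. p j > 0"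
  shows "(\<lambda>t. Fx Y D N d (Lt t) (Rt t) (pt t)) \<longlonglongrightarrow> Fx Y D N d L R p"
  unfolding Fx_def
  by (intro tendsto_intros; use L R p pos in auto)

lemma upd_same: "i < dim_row A \<Longrightarrow> k < dim_col A \<Longrightarrow> (A |\<^sub>m (i, k) \<mapsto> A $$ (i, k)) = A"
  by (intro eq_matI) (auto simp: update_mat_def)

theorem theorem2:
  fixes Y U S V :: "real mat" and D N d :: nat and \<epsilon> :: real
    and Ls Rs Ps :: "nat \<Rightarrow> real mat"
  assumes Y: "Y \<in> carrier_mat D N" and D: "D \<ge> 1" and N: "N \<ge> 1"
    and centered: "\<forall>i<D. (\<Sum>j<N. Y $$ (i, j)) = 0"
    and d: "d \<ge> 1" and dD: "d \<le> D" and dN: "d \<le> N"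
    and eps: "\<epsilon> > 0"
    and svd: "is_svd Y U S V"
    and L0: "Ls 0 = mat D d (\<lambda>(i, k). U $$ (i, k)) * mat_diag d (\<lambda>k. sqrt (S $$ (k, k)))"
    and R0: "Rs 0 = mat N d (\<lambda>(j, k). V $$ (j, k)) * mat_diag d (\<lambda>k. sqrt (S $$ (k, k)))"
    and P0: "Ps 0 = max (Max ((\<lambda>j. colsq (Y - Ls 0 * transpose_mat (Rs 0)) j / real D) ` {..<N})) \<epsilon>
                      \<cdot>\<^sub>m 1\<^sub>m N"
    and invR: "\<forall>t. invertible_mat (transpose_mat (Rs t) * minv (Ps t) * Rs t)"
    and updL: "\<forall>t. Ls (Suc t) = Y * minv (Ps t) * Rs t * minv (transpose_mat (Rs t) * minv (Ps t) * Rs t)"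
    and invL: "\<forall>t. invertible_mat (transpose_mat (Ls (Suc t)) * Ls (Suc t))"
    and updR: "\<forall>t. Rs (Suc t) = transpose_mat Y * Ls (Suc t) * minv (transpose_mat (Ls (Suc t)) * Ls (Suc t))"
    and updP: "\<forall>t. Ps (Suc t) = mat_diag N
                 (\<lambda>j. max (colsq (Y - Ls (Suc t) * transpose_mat (Rs (Suc t))) j / real D) \<epsilon>)"
  shows "\<forall>L R P. L \<in> carrier_mat D d \<and> R \<in> carrier_mat N d \<and> P \<in> carrier_mat N N
           \<and> limit_point3 Ls Rs Ps L R P \<longrightarrow> critical_point Y d \<epsilon> L R P"
proof (intro allI impI)
  have dY: "dim_row Y = D" "dim_col Y = N" using Y by auto
  define pi where "pi t j = Ps t $$ (j, j)" for t j
  define F where "F L R p = Fx Y D N d L R p" for L R p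
  have I1: "Ps t \<in> carrier_mat N N \<and> is_diag (Ps t) \<and> (\<forall>j<N. pi t j \<ge> \<epsilon>)" for t
  proof (cases t)
    case 0
    then show ?thesis unfolding pi_def is_diag_def 0 P0 by auto
  next
    case (Suc t')
    then show ?thesis unfolding pi_def is_diag_def Suc updP[rule_format] mat_diag_def by auto
  qed
  have pipos: "pi t j > 0" if "j < N" for t j using I1[of t] that eps by force
  have I2: "minv (Ps t) = mat_diag N (\<lambda>j. 1 / pi t j)" for t
  proof -
    have "Ps t = mat_diag N (pi t)" using diag_eq[of "Ps t" N] I1[of t] unfolding pi_def by auto
    then show ?thesis using minv_diag[of N "pi t"] pipos[of _ t] by force
  qed
  have I3: "Ls t \<in> carrier_mat D d \<and> Rs t \<in> carrier_mat N d" for t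
  proof (induction t)
    case 0
    have "mat D d (\<lambda>(i, k). U $$ (i, k)) * mat_diag d (\<lambda>k. sqrt (S $$ (k, k))) \<in> carrier_mat D d"
      by (rule mult_carrier_mat[of _ D d]) auto
    moreover have "mat N d (\<lambda>(j, k). V $$ (j, k)) * mat_diag d (\<lambda>k. sqrt (S $$ (k, k))) \<in> carrier_mat N d"
      by (rule mult_carrier_mat[of _ N d]) auto
    ultimately show ?case unfolding L0 R0 by auto
  next
    case (Suc t)
    have W: "minv (Ps t) \<in> carrier_mat N N" unfolding I2 by simp
    have Lc: "Ls (Suc t) \<in> carrier_mat D d"
      using normal_L(2)[OF Y W _ invR[rule_format, of t] updL[rule_format, of t]] Suc by auto
    moreover have "Rs (Suc t) \<in> carrier_mat N d"
      using normal_R(2)[OF Y Lc invL[rule_format, of t] updR[rule_format, of t]] .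
    ultimately show ?case by auto
  qed
  have NEL: "\<forall>i<D. \<forall>k<d. (\<Sum>j<N. (Y $$ (i, j) - (\<Sum>k'<d. Ls (Suc t) $$ (i, k') * Rs t $$ (j, k'))) / pi t j * Rs t $$ (j, k)) = 0" for t
  proof (intro allI impI)
    fix i k assume i: "i < D" and k: "k < d"
    have W: "minv (Ps t) \<in> carrier_mat N N" unfolding I2 by simp
    have "(Y - Ls (Suc t) * transpose_mat (Rs t)) * minv (Ps t) * Rs t = 0\<^sub>m D d"
      using normal_L(1)[OF Y W _ invR[rule_format, of t] updL[rule_format, of t]] I3[of t] by auto
    then have "((Y - Ls (Suc t) * transpose_mat (Rs t)) * minv (Ps t) * Rs t) $$ (i, k) = 0"
      using i k by simp
    then show "(\<Sum>j<N. (Y $$ (i, j) - (\<Sum>k'<d. Ls (Suc t) $$ (i, k') * Rs t $$ (j, k'))) / pi t j * Rs t $$ (j, k)) = 0"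
      unfolding I2 using entry_L[OF Y _ _ i k, of "Ls (Suc t)" "Rs t" "\<lambda>j. 1 / pi t j"] I3[of t] I3[of "Suc t"]
      by simp
  qed
  have NER: "\<forall>j<N. \<forall>k<d. (\<Sum>i<D. (Y $$ (i, j) - (\<Sum>k'<d. Ls (Suc t) $$ (i, k') * Rs (Suc t) $$ (j, k'))) * Ls (Suc t) $$ (i, k)) = 0" for t
  proof (intro allI impI)
    fix j k assume j: "j < N" and k: "k < d"
    have "transpose_mat (Y - Ls (Suc t) * transpose_mat (Rs (Suc t))) * Ls (Suc t) = 0\<^sub>m N d"
      using normal_R(1)[OF Y _ invL[rule_format, of t] updR[rule_format, of t]] I3[of "Suc t"] by auto
    then have "(transpose_mat (Y - Ls (Suc t) * transpose_mat (Rs (Suc t))) * Ls (Suc t)) $$ (j, k) = 0"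
      using j k by simp
    then show "(\<Sum>i<D. (Y $$ (i, j) - (\<Sum>k'<d. Ls (Suc t) $$ (i, k') * Rs (Suc t) $$ (j, k'))) * Ls (Suc t) $$ (i, k)) = 0"
      using entry_R[OF Y _ _ j k, of "Ls (Suc t)" "Rs (Suc t)"] I3[of "Suc t"] by simp
  qed
  have S1: "F (Ls (Suc t)) (Rs t) (pi t) \<le> F L' (Rs t) (pi t)" for t L'
    unfolding F_def using ls_L[OF _ NEL[of t]] pipos by auto
  have S2: "F (Ls (Suc t)) (Rs (Suc t)) p \<le> F (Ls (Suc t)) R' p" if "\<forall>j<N. p j > 0" for t R' p
    unfolding F_def using ls_R[OF that NER[of t]] by auto
  have S3: "F (Ls (Suc t)) (Rs (Suc t)) (pi (Suc t)) \<le> F (Ls (Suc t)) (Rs (Suc t)) p" if "\<forall>j<N. p j \<ge> \<epsilon>" for t p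
  proof -
    have "\<forall>j<N. pi (Suc t) j = max ((\<Sum>i<D. (Y $$ (i, j) - (\<Sum>k<d. Ls (Suc t) $$ (i, k) * Rs (Suc t) $$ (j, k)))\<^sup>2) / real D) \<epsilon>"
    proof (intro allI impI)
      fix j assume j: "j < N"
      have "colsq (Y - Ls (Suc t) * transpose_mat (Rs (Suc t))) j
          = (\<Sum>i<D. (Y $$ (i, j) - (\<Sum>k<d. Ls (Suc t) $$ (i, k) * Rs (Suc t) $$ (j, k)))\<^sup>2)"
        unfolding colsq_def using resid_index[OF Y _ _ _ j, of "Ls (Suc t)" d "Rs (Suc t)"] I3[of "Suc t"] Y
        by (auto intro!: sum.cong)
      then show "pi (Suc t) j = max ((\<Sum>i<D. (Y $$ (i, j) - (\<Sum>k<d. Ls (Suc t) $$ (i, k) * Rs (Suc t) $$ (j, k)))\<^sup>2) / real D) \<epsilon>"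
        unfolding pi_def updP[rule_format] using j by (simp add: mat_diag_def)
    qed
    then have "F (Ls (Suc t)) (Rs (Suc t)) (pi (Suc t)) = Fx Y D N d (Ls (Suc t)) (Rs (Suc t))
        (\<lambda>j. max ((\<Sum>i<D. (Y $$ (i, j) - (\<Sum>k<d. Ls (Suc t) $$ (i, k) * Rs (Suc t) $$ (j, k)))\<^sup>2) / real D) \<epsilon>)"
      unfolding F_def by (rule Fx_cong_p)
    also have "\<dots> \<le> F (Ls (Suc t)) (Rs (Suc t)) p" unfolding F_def using ls_P[OF D eps that] .
    finally show ?thesis .
  qed
  define a where "a t = F (Ls t) (Rs t) (pi t)" for t
  have step: "a (Suc t) \<le> F (Ls (Suc t)) (Rs t) (pi t)" for t
  proof -
    have "a (Suc t) \<le> F (Ls (Suc t)) (Rs (Suc t)) (pi t)" unfolding a_def using S3 I1 by blast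
    also have "\<dots> \<le> F (Ls (Suc t)) (Rs t) (pi t)" using S2 pipos by blast
    finally show ?thesis .
  qed
  have dec: "decseq a"
  proof (rule decseq_SucI)
    fix t show "a (Suc t) \<le> a t" using step[of t] S1[of t "Ls t"] unfolding a_def by linarith
  qed
  have lb: "\<forall>t. real D / 2 * (\<Sum>j<N. ln \<epsilon>) \<le> a t"
  proof
    fix t
    have "0 \<le> (1/2) * (\<Sum>j<N. (\<Sum>i<D. (Y $$ (i, j) - (\<Sum>k<d. Ls t $$ (i, k) * Rs t $$ (j, k)))\<^sup>2) / pi t j)"
      using pipos[of _ t] by (intro mult_nonneg_nonneg sum_nonneg divide_nonneg_nonneg) (auto simp: less_imp_le)
    moreover have "(\<Sum>j<N. ln \<epsilon>) \<le> (\<Sum>j<N. ln (pi t j))"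
      using I1[of t] eps by (intro sum_mono) auto
    ultimately show "real D / 2 * (\<Sum>j<N. ln \<epsilon>) \<le> a t"
      unfolding a_def F_def Fx_def by (smt (verit) mult_left_mono of_nat_0_le_iff divide_nonneg_nonneg zero_le_numeral)
  qed
  obtain fs where fs: "a \<longlonglongrightarrow> fs" "\<forall>t. fs \<le> a t" using decseq_convergent[OF dec lb] by blast

  fix L R P
  assume asm: "L \<in> carrier_mat D d \<and> R \<in> carrier_mat N d \<and> P \<in> carrier_mat N N \<and> limit_point3 Ls Rs Ps L R P"
  then have Lc: "L \<in> carrier_mat D d" and Rc: "R \<in> carrier_mat N d" and Pc: "P \<in> carrier_mat N N" by auto
  from asm obtain \<phi> where phi: "strict_mono \<phi>" and
    tL: "mat_tendsto (Ls \<circ> \<phi>) L" and tR: "mat_tendsto (Rs \<circ> \<phi>) R" and tP: "mat_tendsto (Ps \<circ> \<phi>) P"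
    unfolding limit_point3_def by auto
  have hL: "\<forall>i<D. \<forall>k<d. (\<lambda>n. Ls (\<phi> n) $$ (i, k)) \<longlonglongrightarrow> L $$ (i, k)"
    using tL Lc unfolding mat_tendsto_def by auto
  have hR: "\<forall>j<N. \<forall>k<d. (\<lambda>n. Rs (\<phi> n) $$ (j, k)) \<longlonglongrightarrow> R $$ (j, k)"
    using tR Rc unfolding mat_tendsto_def by auto
  have hP: "\<forall>i<N. \<forall>j<N. (\<lambda>n. Ps (\<phi> n) $$ (i, j)) \<longlonglongrightarrow> P $$ (i, j)"
    using tP Pc unfolding mat_tendsto_def by auto
  define ps where "ps j = P $$ (j, j)" for j
  have hp: "\<forall>j<N. (\<lambda>n. pi (\<phi> n) j) \<longlonglongrightarrow> ps j" using hP unfolding pi_def ps_def by auto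
  have Pdiag: "is_diag P" unfolding is_diag_def
  proof (intro allI impI)
    fix i j assume "i < dim_row P" "j < dim_col P" "i \<noteq> j"
    then have ij: "i < N" "j < N" "i \<noteq> j" using Pc by auto
    have "Ps (\<phi> n) $$ (i, j) = 0" for n using I1[of "\<phi> n"] ij unfolding is_diag_def by auto
    then have "(\<lambda>n. Ps (\<phi> n) $$ (i, j)) = (\<lambda>n. 0)" by auto
    then show "P $$ (i, j) = 0" using hP ij LIMSEQ_unique[OF _ tendsto_const] by metis
  qed
  have pseps: "ps j \<ge> \<epsilon>" if "j < N" for j
    using LIMSEQ_le_const[OF hp[rule_format, OF that], of \<epsilon>] I1 that by auto
  have pspos: "\<forall>j<N. ps j > 0" using pseps eps by force
  have feas: "feasible D N d \<epsilon> L R P" unfolding feasible_def using Lc Rc Pc Pdiag pseps ps_def by auto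
  have phi1: "\<phi> n = Suc (\<phi> n - 1)" if "n \<ge> 1" for n using seq_suble[OF phi, of n] that by auto
  have t1: "(\<lambda>n. a (\<phi> n)) \<longlonglongrightarrow> F L R ps"
    unfolding a_def F_def by (rule Fx_tendsto[OF hL hR hp pspos])
  have t2: "(\<lambda>n. a (\<phi> n)) \<longlonglongrightarrow> fs" using LIMSEQ_subseq_LIMSEQ[OF fs(1) phi] by (simp add: comp_def)
  have Fstar: "F L R ps = fs" using LIMSEQ_unique[OF t1 t2] .
  have minL: "F L R ps \<le> F L' R ps" for L'
  proof -
    have "(\<lambda>n. F L' (Rs (\<phi> n)) (pi (\<phi> n))) \<longlonglongrightarrow> F L' R ps"
      unfolding F_def by (rule Fx_tendsto[OF _ hR hp pspos]) auto
    moreover have "fs \<le> F L' (Rs (\<phi> n)) (pi (\<phi> n))" for n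
      using fs(2)[rule_format, of "Suc (\<phi> n)"] step[of "\<phi> n"] S1[of "\<phi> n" L'] by linarith
    ultimately show ?thesis unfolding Fstar by (intro LIMSEQ_le_const) auto
  qed
  have minR: "F L R ps \<le> F L R' ps" for R'
  proof -
    have "(\<lambda>n. F (Ls (\<phi> n)) R' (pi (\<phi> n))) \<longlonglongrightarrow> F L R' ps"
      unfolding F_def by (rule Fx_tendsto[OF hL _ hp pspos]) auto
    moreover have "a (\<phi> n) \<le> F (Ls (\<phi> n)) R' (pi (\<phi> n))" if "n \<ge> 1" for n
    proof -
      have "a (Suc (\<phi> n - 1)) \<le> F (Ls (Suc (\<phi> n - 1))) R' (pi (Suc (\<phi> n - 1)))"
        unfolding a_def using S2 pipos by blast
      then show ?thesis using phi1[OF that] by metis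
    qed
    ultimately show ?thesis using t1 by (intro LIMSEQ_le) auto
  qed
  have minP: "F L R ps \<le> F L R p" if "\<forall>j<N. p j \<ge> \<epsilon>" for p
  proof -
    have "(\<lambda>n. F (Ls (\<phi> n)) (Rs (\<phi> n)) p) \<longlonglongrightarrow> F L R p"
      unfolding F_def by (rule Fx_tendsto[OF hL hR _ ]) (use that eps in force)+
    moreover have "a (\<phi> n) \<le> F (Ls (\<phi> n)) (Rs (\<phi> n)) p" if "n \<ge> 1" for n
    proof -
      have "a (Suc (\<phi> n - 1)) \<le> F (Ls (Suc (\<phi> n - 1))) (Rs (Suc (\<phi> n - 1))) p"
        unfolding a_def using S3 \<open>\<forall>j<N. p j \<ge> \<epsilon>\<close> by blast
      then show ?thesis using phi1[OF that] by metis
    qed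
    ultimately show ?thesis using t1 by (intro LIMSEQ_le) auto
  qed
  define hL where "hL i k x = fobj Y (L |\<^sub>m (i, k) \<mapsto> x) R P" for i k x
  define hR where "hR j k x = fobj Y L (R |\<^sub>m (j, k) \<mapsto> x) P" for j k x
  define hP where "hP j x = fobj Y L R (P |\<^sub>m (j, j) \<mapsto> x)" for j x
  define G where "G j x = F L R (ps(j := x))" for j x
  have Pd: "P = P" ..
  have fobjF: "fobj Y L' R' P = F L' R' ps" if "L' \<in> carrier_mat D d" "R' \<in> carrier_mat N d" for L' R'
    unfolding F_def ps_def using fobj_eq[OF Y that Pc Pdiag] pspos unfolding ps_def by auto
  have hL_F: "hL i k x = F (L |\<^sub>m (i, k) \<mapsto> x) R ps" for i k x
    unfolding hL_def using Lc Rc by (intro fobjF) auto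
  have hR_F: "hR j k x = F L (R |\<^sub>m (j, k) \<mapsto> x) ps" for j k x
    unfolding hR_def using Lc Rc by (intro fobjF) auto
  have hL_Fxf: "hL i k = (\<lambda>x. Fxf Y D N d (\<lambda>i' k'. if (i', k') = (i, k) then x else L $$ (i', k')) (\<lambda>j k. R $$ (j, k)) ps)" for i k
  proof
    fix x
    have "L |\<^sub>m (i, k) \<mapsto> x = mat D d (\<lambda>ij'. if ij' = (i, k) then x else L $$ ij')"
      unfolding update_mat_def using Lc by auto
    then show "hL i k x = Fxf Y D N d (\<lambda>i' k'. if (i', k') = (i, k) then x else L $$ (i', k')) (\<lambda>j k. R $$ (j, k)) ps"
      unfolding hL_F F_def by (simp add: Fx_mat_L)
  qed
  have hR_Fxf: "hR j k = (\<lambda>x. Fxf Y D N d (\<lambda>i k. L $$ (i, k)) (\<lambda>j' k'. if (j', k') = (j, k) then x else R $$ (j', k')) ps)" for j k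
  proof
    fix x
    have "R |\<^sub>m (j, k) \<mapsto> x = mat N d (\<lambda>ij'. if ij' = (j, k) then x else R $$ ij')"
      unfolding update_mat_def using Rc by auto
    then show "hR j k x = Fxf Y D N d (\<lambda>i k. L $$ (i, k)) (\<lambda>j' k'. if (j', k') = (j, k) then x else R $$ (j', k')) ps"
      unfolding hR_F F_def by (simp add: Fx_mat_R)
  qed
  have hP_G: "hP j x = G j x" if j: "j < N" and x: "x > 0" for j x
  proof -
    have c: "P |\<^sub>m (j, j) \<mapsto> x \<in> carrier_mat N N" using Pc by auto
    have dg: "is_diag (P |\<^sub>m (j, j) \<mapsto> x)" using Pdiag Pc unfolding is_diag_def update_mat_def by auto
    have e: "(P |\<^sub>m (j, j) \<mapsto> x) $$ (j', j') = (ps(j := x)) j'" if "j' < N" for j'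
      using that Pc unfolding update_mat_def ps_def by auto
    have pos: "\<forall>j'<N. (P |\<^sub>m (j, j) \<mapsto> x) $$ (j', j') > 0" using e pspos x by auto
    have "hP j x = Fx Y D N d L R (\<lambda>j'. (P |\<^sub>m (j, j) \<mapsto> x) $$ (j', j'))"
      unfolding hP_def using fobj_eq[OF Y Lc Rc c dg pos] .
    also have "\<dots> = G j x" unfolding G_def F_def using e by (intro Fx_cong_p) auto
    finally show ?thesis .
  qed
  define gL where "gL i k = (SOME g. (hL i k has_real_derivative g) (at (L $$ (i, k))))" for i k
  define gR where "gR j k = (SOME g. (hR j k has_real_derivative g) (at (R $$ (j, k))))" for j k
  define gP where "gP j = (SOME g. (G j has_real_derivative g) (at (ps j)))" for j
  have dL: "(hL i k has_real_derivative gL i k) (at (L $$ (i, k)))" for i k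
    unfolding gL_def hL_Fxf by (rule someI_ex, rule derL, rule pspos)
  have dR: "(hR j k has_real_derivative gR j k) (at (R $$ (j, k)))" for j k
    unfolding gR_def hR_Fxf by (rule someI_ex, rule derR, rule pspos)
  have dG: "(G j has_real_derivative gP j) (at (ps j))" if "j < N" for j
    unfolding gP_def G_def F_def by (rule someI_ex, rule derP[OF pspos], use pspos that in auto)
  have dP: "(hP j has_real_derivative gP j) (at (P $$ (j, j)))" if j: "j < N" for j
  proof -
    have "(hP j has_real_derivative gP j) (at (ps j))"
    proof (rule has_field_derivative_transform_within_open[OF dG[OF j], of "{0<..}"])
      show "ps j \<in> {0<..}" using pspos j by auto
      show "G j x = hP j x" if "x \<in> {0<..}" for x using hP_G[OF j, of x] that by auto
    qed auto
    then show ?thesis unfolding ps_def .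
  qed
  have gL0: "gL i k = 0" if "i < D" "k < d" for i k
  proof (rule DERIV_local_min[OF dL, of 1])
    show "\<forall>y. \<bar>L $$ (i, k) - y\<bar> < 1 \<longrightarrow> hL i k (L $$ (i, k)) \<le> hL i k y"
      unfolding hL_F using upd_same[of i L k] that Lc minL by auto
  qed auto
  have gR0: "gR j k = 0" if "j < N" "k < d" for j k
  proof (rule DERIV_local_min[OF dR, of 1])
    show "\<forall>y. \<bar>R $$ (j, k) - y\<bar> < 1 \<longrightarrow> hR j k (R $$ (j, k)) \<le> hR j k y"
      unfolding hR_F using upd_same[of j R k] that Rc minR by auto
  qed auto
  have Gmin: "G j (ps j) \<le> G j y" if "j < N" "y \<ge> \<epsilon>" for j y
    unfolding G_def using minP[of "ps(j := y)"] pseps that by auto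
  have gP0: "gP j = 0" if j: "j < N" and gt: "ps j > \<epsilon>" for j
  proof (rule DERIV_local_min[OF dG[OF j], of "ps j - \<epsilon>"])
    show "\<forall>y. \<bar>ps j - y\<bar> < ps j - \<epsilon> \<longrightarrow> G j (ps j) \<le> G j y"
      using Gmin[OF j] by auto
  qed (use gt in auto)
  have gPnn: "gP j \<ge> 0" if j: "j < N" for j
  proof (rule ccontr)
    assume "\<not> gP j \<ge> 0"
    then have "gP j < 0" by simp
    from DERIV_neg_dec_right[OF dG[OF j] this] obtain dd where dd: "dd > 0"
      "\<forall>h>0. h < dd \<longrightarrow> G j (ps j + h) < G j (ps j)" by auto
    then have "G j (ps j + dd / 2) < G j (ps j)" by auto
    moreover have "G j (ps j) \<le> G j (ps j + dd / 2)" using Gmin[OF j] pseps[OF j] dd by auto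
    ultimately show False by simp
  qed
  have ineq: "0 \<le> (\<Sum>i<D. \<Sum>k<d. gL i k * (L' $$ (i, k) - L $$ (i, k)))
             + (\<Sum>j<N. \<Sum>k<d. gR j k * (R' $$ (j, k) - R $$ (j, k)))
             + (\<Sum>j<N. gP j * (P' $$ (j, j) - P $$ (j, j)))" if f': "feasible D N d \<epsilon> L' R' P'" for L' R' P'
  proof -
    have z1: "(\<Sum>i<D. \<Sum>k<d. gL i k * (L' $$ (i, k) - L $$ (i, k))) = 0" using gL0 by simp
    have z2: "(\<Sum>j<N. \<Sum>k<d. gR j k * (R' $$ (j, k) - R $$ (j, k))) = 0" using gR0 by simp
    have z3: "0 \<le> (\<Sum>j<N. gP j * (P' $$ (j, j) - P $$ (j, j)))"
    proof (intro sum_nonneg)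
      fix j assume "j \<in> {..<N}"
      then have j: "j < N" by simp
      show "0 \<le> gP j * (P' $$ (j, j) - P $$ (j, j))"
      proof (cases "ps j > \<epsilon>")
        case True then show ?thesis using gP0[OF j] by simp
      next
        case False
        then have "ps j = \<epsilon>" using pseps[OF j] by simp
        moreover have "P' $$ (j, j) \<ge> \<epsilon>" using f' j unfolding feasible_def by auto
        ultimately show ?thesis using gPnn[OF j] unfolding ps_def by simp
      qed
    qed
    show "0 \<le> (\<Sum>i<D. \<Sum>k<d. gL i k * (L' $$ (i, k) - L $$ (i, k)))
             + (\<Sum>j<N. \<Sum>k<d. gR j k * (R' $$ (j, k) - R $$ (j, k)))
             + (\<Sum>j<N. gP j * (P' $$ (j, j) - P $$ (j, j)))"
      using z1 z2 z3 by simp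
  qed
  have dL': "\<forall>i<D. \<forall>k<d. ((\<lambda>x. fobj Y (L |\<^sub>m (i, k) \<mapsto> x) R P) has_real_derivative gL i k) (at (L $$ (i, k)))"
    using dL unfolding hL_def by blast
  have dR': "\<forall>j<N. \<forall>k<d. ((\<lambda>x. fobj Y L (R |\<^sub>m (j, k) \<mapsto> x) P) has_real_derivative gR j k) (at (R $$ (j, k)))"
    using dR unfolding hR_def by blast
  have dP': "\<forall>j<N. ((\<lambda>x. fobj Y L R (P |\<^sub>m (j, j) \<mapsto> x)) has_real_derivative gP j) (at (P $$ (j, j)))"
    using dP unfolding hP_def by blast
  show "critical_point Y d \<epsilon> L R P"
    unfolding critical_point_def dY using feas dL' dR' dP' ineq by blast
qed

end
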